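(* With $\omega(N)=\frac{1}{\sqrt N}\sum_{i=1}^N\omega_i$ on the discrete V-monotone Fock space and $\varphi$ the vacuum state, for every $k\in\mathbb{N}$: $\lim_{N\to\infty}\varphi(\omega(N)^{2k})=|\mathcal{OV}^2(2k)|/k!$ and $\lim_{N\to\infty}\varphi(\omega(N)^{2k+1})=0$.
   Context: $I=\mathbb{N}_+$; $I_n$ is the set of $(i_1,\dots,i_n)\in I^n$ with $i_1>\dots>i_m<\dots<i_n$ for some $m$ (strict), $\mathbb 1_n$ its indicator. $\mathcal{DV}$ has orthonormal basis $\{\Omega\}\cup\{e_{i_1}\otimes\dots\otimes e_{i_n}:(i_1,\dots,i_n)\in I_n\}$; $a_i\Omega=e_i$, $a_i(e_{i_1}\otimes\dots\otimes e_{i_n})=\mathbb 1_{n+1}(i,i_1,\dots,i_n)e_i\otimes e_{i_1}\otimes\dots\otimes e_{i_n}$; $a_i^*$ its adjoint; $\omega_i=a_i+a_i^*$; $\varphi(T)=\langle T\Omega,\Omega\rangle$. $\mathcal{OV}^2(2k)$: pairs $(\pi,\mathfrak i)$ with $\pi$ a non-crossing pair partition of $[2k]$ and $\mathfrak i:\pi\to[k]$ a bijection such that along every sequence of blocks $B_1,\dots,B_r$ with $B_{j+1}$ the nearest outer block of $B_j$ (i.e. $B_j$ lies strictly between the two legs of $B_{j+1}$ and no other block lies in between in this sense), $(\mathfrak i(B_1),\dots,\mathfrak i(B_r))\in I_r$. *)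

theory Defs
  imports Complex_Main "HOL-Library.FuncSet" "HOL-Library.Disjoint_Sets"
begin

text \<open>The empty word (n = 0) is admitted; it indexes the vacuum vector Omega.\<close>
definition vword :: "nat list \<Rightarrow> bool" where
  "vword w \<longleftrightarrow> (\<forall>i\<in>set w. 0 < i) \<and>
     (w = [] \<or> (\<exists>m<length w. (\<forall>j. Suc j \<le> m \<longrightarrow> w ! j > w ! Suc j) \<and>
                          (\<forall>j. m \<le> j \<and> Suc j < length w \<longrightarrow> w ! j < w ! Suc j)))"

text \<open>Vectors of the discrete V-monotone Fock space, given by their coefficients
with respect to the orthonormal basis indexed by V-shaped words ([] = Omega).\<close>
type_synonym vec = "nat list \<Rightarrow> real"

definition Omega :: vec where
  "Omega = (\<lambda>u. if u = [] then 1 else 0)"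

text \<open>creation operator a_i: e_w \<mapsto> 1_{n+1}(i,w) e_{i w}\<close>
definition acr :: "nat \<Rightarrow> vec \<Rightarrow> vec" where
  "acr i v = (\<lambda>u. case u of [] \<Rightarrow> 0 | j # w \<Rightarrow> (if j = i \<and> vword u then v w else 0))"

text \<open>annihilation operator a_i^*, the adjoint of a_i\<close>
definition aan :: "nat \<Rightarrow> vec \<Rightarrow> vec" where
  "aan i v = (\<lambda>w. if vword (i # w) then v (i # w) else 0)"

definition omega :: "nat \<Rightarrow> vec \<Rightarrow> vec" where
  "omega i v = (\<lambda>u. acr i v u + aan i v u)"

definition omegaN :: "nat \<Rightarrow> vec \<Rightarrow> vec" where
  "omegaN N v = (\<lambda>u. (1 / sqrt (real N)) * (\<Sum>i = 1..N. omega i v u))"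

text \<open>vacuum state phi(T) = <T Omega, Omega>\<close>
definition vac :: "(vec \<Rightarrow> vec) \<Rightarrow> real" where
  "vac T = T Omega []"

definition pair_partition :: "nat \<Rightarrow> nat set set \<Rightarrow> bool" where
  "pair_partition n P \<longleftrightarrow> partition_on {1..n} P \<and> (\<forall>B\<in>P. card B = 2)"

definition noncrossing :: "nat set set \<Rightarrow> bool" where
  "noncrossing P \<longleftrightarrow> (\<forall>B\<in>P. \<forall>C\<in>P. \<not> (Min B < Min C \<and> Min C < Max B \<and> Max B < Max C))"

definition inside :: "nat set \<Rightarrow> nat set \<Rightarrow> bool" where
  "inside B C \<longleftrightarrow> Min C < Min B \<and> Max B < Max C"

definition nearest_outer :: "nat set set \<Rightarrow> nat set \<Rightarrow> nat set \<Rightarrow> bool" where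
  "nearest_outer P B C \<longleftrightarrow> B \<in> P \<and> C \<in> P \<and> inside B C \<and>
     \<not> (\<exists>D\<in>P. inside B D \<and> inside D C)"

definition OV2 :: "nat \<Rightarrow> (nat set set \<times> (nat set \<Rightarrow> nat)) set" where
  "OV2 k = {(P, f). pair_partition (2 * k) P \<and> noncrossing P \<and>
     f \<in> extensional P \<and> bij_betw f P {1..k} \<and>
     (\<forall>Bs. Bs \<noteq> [] \<and> set Bs \<subseteq> P \<and>
        (\<forall>j. Suc j < length Bs \<longrightarrow> nearest_outer P (Bs ! j) (Bs ! Suc j))
        \<longrightarrow> vword (map f Bs))}"

end

theory Submission
  imports Defs
begin

fun run :: "nat list \<Rightarrow> nat list \<Rightarrow> bool" where
  "run u [] = (u = [])"
| "run u (x # xs) = (if x = 0 then u \<noteq> [] \<and> run (tl u) xs else vword (x # u) \<and> run (x # u) xs)"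

definition walks :: "nat \<Rightarrow> nat \<Rightarrow> nat list \<Rightarrow> nat list set" where
  "walks N n u = {ws. set ws \<subseteq> {..N} \<and> length ws = n \<and> run u ws}"

lemma vword_tl: "vword (j # w) \<Longrightarrow> vword w"
proof -
  assume a: "vword (j # w)"
  show "vword w"
  proof (cases "w = []")
    case True then show ?thesis by (simp add: vword_def)
  next
    case False
    from a obtain m where m: "m < length (j # w)"
      "\<forall>i. Suc i \<le> m \<longrightarrow> (j#w) ! i > (j#w) ! Suc i"
      "\<forall>i. m \<le> i \<and> Suc i < length (j#w) \<longrightarrow> (j#w) ! i < (j#w) ! Suc i"
      and pos: "\<forall>i\<in>set (j#w). 0 < i" unfolding vword_def by auto
    show ?thesis unfolding vword_def
    proof (intro conjI disjI2)
      show "\<forall>i\<in>set w. 0 < i" using pos by auto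
      show "\<exists>m<length w. (\<forall>j. Suc j \<le> m \<longrightarrow> w ! j > w ! Suc j) \<and>
                          (\<forall>j. m \<le> j \<and> Suc j < length w \<longrightarrow> w ! j < w ! Suc j)"
      proof (rule exI[of _ "m - 1"], intro conjI allI impI)
        show "m - 1 < length w" using m(1) False by (cases w) auto
      next
        fix i assume "Suc i \<le> m - 1"
        then show "w ! i > w ! Suc i" using m(2)[rule_format, of "Suc i"] by auto
      next
        fix i assume "m - 1 \<le> i \<and> Suc i < length w"
        then show "w ! i < w ! Suc i" using m(3)[rule_format, of "Suc i"] by auto
      qed
    qed
  qed
qed

definition good :: "nat \<Rightarrow> nat list \<Rightarrow> bool" where
  "good N u \<longleftrightarrow> vword u \<and> set u \<subseteq> {1..N}"

lemma card_lists_Suc: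
  assumes "finite A"
  shows "card {ws. set ws \<subseteq> A \<and> length ws = Suc n \<and> Q ws} =
         (\<Sum>x\<in>A. card {ws. set ws \<subseteq> A \<and> length ws = n \<and> Q (x # ws)})"
proof -
  have eq: "{ws. set ws \<subseteq> A \<and> length ws = Suc n \<and> Q ws} =
     (\<Union>x\<in>A. Cons x ` {ws. set ws \<subseteq> A \<and> length ws = n \<and> Q (x # ws)})"
    by (auto simp: length_Suc_conv)
  have fin: "finite {ws. set ws \<subseteq> A \<and> length ws = n \<and> Q (x # ws)}" for x
    by (rule finite_subset[OF _ finite_lists_length_eq[OF assms, of n]]) auto
  show ?thesis unfolding eq
    by (subst card_UN_disjoint) (auto simp: assms fin card_image)
qed

lemma sum_atMost_split0: "(\<Sum>x\<in>{..N::nat}. f x) = f 0 + (\<Sum>x\<in>{1..N}. f x)"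
proof -
  have "{..N} = insert 0 {1..N}" by auto
  then show ?thesis by (simp add: sum.insert)
qed

lemma walks_0: "walks N 0 u = (if u = [] then {[]} else {})"
  by (auto simp: walks_def)

lemma walks_fin: "finite (walks N n u)"
  unfolding walks_def
  by (rule finite_subset[OF _ finite_lists_length_eq[of "{..N}" n]]) auto

lemma card_walks_Suc:
  "card (walks N (Suc n) u) =
     (if u \<noteq> [] then card (walks N n (tl u)) else 0) +
     (\<Sum>i=1..N. if vword (i # u) then card (walks N n (i # u)) else 0)"
proof -
  have "card (walks N (Suc n) u) = (\<Sum>x\<in>{..N}. card {ws. set ws \<subseteq> {..N} \<and> length ws = n \<and> run u (x # ws)})"
    unfolding walks_def by (rule card_lists_Suc) simp
  also have "(\<Sum>x\<in>{..N}. card {ws. set ws \<subseteq> {..N} \<and> length ws = n \<and> run u (x # ws)})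
     = card {ws. set ws \<subseteq> {..N} \<and> length ws = n \<and> run u (0 # ws)} +
       (\<Sum>x\<in>{1..N}. card {ws. set ws \<subseteq> {..N} \<and> length ws = n \<and> run u (x # ws)})"
    by (rule sum_atMost_split0)
  also have "card {ws. set ws \<subseteq> {..N} \<and> length ws = n \<and> run u (0 # ws)} =
      (if u \<noteq> [] then card (walks N n (tl u)) else 0)"
    unfolding walks_def by auto
  also have "(\<Sum>x\<in>{1..N}. card {ws. set ws \<subseteq> {..N} \<and> length ws = n \<and> run u (x # ws)}) =
     (\<Sum>i=1..N. if vword (i # u) then card (walks N n (i # u)) else 0)"
    by (rule sum.cong) (auto simp: walks_def)
  finally show ?thesis .
qed

lemma omega_power:
  "good N u \<Longrightarrow> (omegaN N ^^ n) Omega u = (1 / sqrt (real N)) ^ n * real (card (walks N n u))"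
proof (induction n arbitrary: u)
  case 0
  then show ?case
    by (cases "u = []") (auto simp: Omega_def walks_0)
next
  case (Suc n)
  define v where "v = (omegaN N ^^ n) Omega"
  have acr: "(\<Sum>i = 1..N. acr i v u) = (if u \<noteq> [] then v (tl u) else 0)"
  proof (cases u)
    case Nil then show ?thesis by (simp add: acr_def)
  next
    case (Cons j w)
    have "j \<in> {1..N}" "vword u" using Suc.prems Cons by (auto simp: good_def)
    then have "(\<Sum>i = 1..N. acr i v u) = (\<Sum>i = 1..N. if i = j then v w else 0)"
      by (intro sum.cong) (auto simp: acr_def Cons)
    also have "\<dots> = v w" using \<open>j \<in> {1..N}\<close> by (simp add: sum.delta)
    finally show ?thesis by (simp add: Cons)
  qed
  have tlgood: "u \<noteq> [] \<Longrightarrow> good N (tl u)" using Suc.prems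
    by (cases u) (auto simp: good_def intro: vword_tl)
  have aan: "(\<Sum>i = 1..N. aan i v u) = (\<Sum>i = 1..N. if vword (i # u) then
        (1 / sqrt (real N)) ^ n * real (card (walks N n (i # u))) else 0)"
  proof (rule sum.cong)
    fix i assume i: "i \<in> {1..N}"
    have "vword (i # u) \<Longrightarrow> good N (i # u)" using Suc.prems i by (auto simp: good_def)
    then show "aan i v u = (if vword (i # u) then
        (1 / sqrt (real N)) ^ n * real (card (walks N n (i # u))) else 0)"
      by (auto simp: aan_def v_def Suc.IH)
  qed simp
  have "(omegaN N ^^ Suc n) Omega u = 1 / sqrt (real N) * ((\<Sum>i = 1..N. acr i v u) + (\<Sum>i = 1..N. aan i v u))"
    by (simp add: v_def omegaN_def omega_def sum.distrib)
  also have "\<dots> = (1 / sqrt (real N)) ^ Suc n * real (card (walks N (Suc n) u))"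
    unfolding acr aan card_walks_Suc
    using Suc.IH[OF tlgood]
    by (simp add: v_def sum_distrib_left ring_distribs of_nat_sum if_distrib cong: if_cong)
  finally show ?case .
qed

lemma run_parity: "run u ws \<Longrightarrow> even (length u + length ws)"
  by (induction u ws rule: run.induct) (auto split: if_splits, (case_tac u; simp)?)

lemma vac_eq: "vac (omegaN N ^^ n) = (1 / sqrt (real N)) ^ n * real (card (walks N n []))"
  unfolding vac_def by (rule omega_power) (simp add: good_def vword_def)

lemma vac_odd: "vac (omegaN N ^^ (2 * k + 1)) = 0"
proof -
  have "walks N (2 * k + 1) [] = {}" unfolding walks_def using run_parity[of "[]"] by fastforce
  have "vac (omegaN N ^^ (2 * k + 1)) = (1 / sqrt (real N)) ^ (2 * k + 1) * real (card (walks N (2 * k + 1) []))"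
    by (rule vac_eq)
  also have "\<dots> = 0" using \<open>walks N (2 * k + 1) [] = {}\<close> by simp
  finally show ?thesis .
qed

lemma vac_even: "vac (omegaN N ^^ (2 * k)) = real (card (walks N (2*k) [])) / real N ^ k"
proof -
  have "(1 / sqrt (real N)) ^ (2 * k) = 1 / real N ^ k"
    by (simp add: power_mult power_divide)
  then show ?thesis by (simp add: vac_eq)
qed

definition labs :: "nat list \<Rightarrow> nat list" where
  "labs ws = filter (\<lambda>x. 0 < x) ws"

lemma run_len: "run u ws \<Longrightarrow> length ws = 2 * length (labs ws) + length u"
  by (induction u ws rule: run.induct) (auto simp: labs_def split: if_splits)

lemma walks_labs_len: "ws \<in> walks N (2*k) [] \<Longrightarrow> length (labs ws) = k"
  unfolding walks_def using run_len[of "[]" ws] by auto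

lemma vword_map:
  assumes g: "strict_mono_on A g" and g0: "g 0 = 0" and A0: "0 \<in> A" and w: "set w \<subseteq> A"
  shows "vword (map g w) = vword w"
proof -
  have lt: "x \<in> A \<Longrightarrow> y \<in> A \<Longrightarrow> g x < g y \<longleftrightarrow> x < y" for x y
    using strict_mono_on_less[OF g] by blast
  have wi: "i < length w \<Longrightarrow> w ! i \<in> A" for i using w by auto
  have pos: "(\<forall>i\<in>set (map g w). 0 < i) = (\<forall>i\<in>set w. 0 < i)"
    using lt[OF A0] g0 w by auto
  have c1: "(\<forall>j. Suc j \<le> m \<longrightarrow> map g w ! j > map g w ! Suc j) = (\<forall>j. Suc j \<le> m \<longrightarrow> w ! j > w ! Suc j)"
    if "m < length w" for m
    using that lt wi by (auto simp: nth_map)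
  have c2: "(\<forall>j. m \<le> j \<and> Suc j < length (map g w) \<longrightarrow> map g w ! j < map g w ! Suc j) =
      (\<forall>j. m \<le> j \<and> Suc j < length w \<longrightarrow> w ! j < w ! Suc j)" for m
    using lt wi by (auto simp: nth_map)
  have E: "(\<exists>m<length w. (\<forall>j. Suc j \<le> m \<longrightarrow> map g w ! j > map g w ! Suc j) \<and>
      (\<forall>j. m \<le> j \<and> Suc j < length (map g w) \<longrightarrow> map g w ! j < map g w ! Suc j)) =
    (\<exists>m<length w. (\<forall>j. Suc j \<le> m \<longrightarrow> w ! j > w ! Suc j) \<and>
      (\<forall>j. m \<le> j \<and> Suc j < length w \<longrightarrow> w ! j < w ! Suc j))"
    using c1 c2 by blast
  have N: "(map g w = []) = (w = [])" by simp
  show ?thesis unfolding vword_def pos length_map[of g w] N E[unfolded length_map] ..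
qed

lemma run_map:
  assumes g: "strict_mono_on A g" and g0: "g 0 = 0" and A0: "0 \<in> A"
  shows "set u \<subseteq> A \<Longrightarrow> set ws \<subseteq> A \<Longrightarrow> run (map g u) (map g ws) = run u ws"
proof (induction ws arbitrary: u)
  case Nil then show ?case by simp
next
  case (Cons x ws)
  have x: "x \<in> A" using Cons by auto
  have gx: "(g x = 0) = (x = 0)" using strict_mono_on_less[OF g A0 x] g0
    by (cases "x = 0") auto
  have tlA: "set (tl u) \<subseteq> A" using Cons.prems by (cases u) auto
  show ?case
  proof (cases "x = 0")
    case True
    then show ?thesis using gx Cons.IH[OF tlA] Cons.prems by (simp add: map_tl)
  next
    case False
    have "vword (g x # map g u) = vword (x # u)"
      using vword_map[OF g g0 A0, of "x # u"] x Cons.prems by simp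
    then show ?thesis using False gx Cons.IH[of "x # u"] x Cons.prems by simp
  qed
qed

lemma labs_map:
  assumes "\<forall>x\<in>set ws. (0 < g x) = (0 < x)"
  shows "labs (map g ws) = map g (labs ws)"
  using assms by (induction ws) (auto simp: labs_def)

lemma set_ws_labs: "set ws \<subseteq> insert 0 (set (labs ws))"
  by (auto simp: labs_def)

definition Dset :: "nat \<Rightarrow> nat list set" where
  "Dset k = {ws \<in> walks k (2*k) []. distinct (labs ws)}"

definition InjS :: "nat \<Rightarrow> nat \<Rightarrow> nat set \<Rightarrow> nat list set" where
  "InjS N k S = {ws \<in> walks N (2*k) []. distinct (labs ws) \<and> set (labs ws) = S}"

lemma Dset_labs: "ws \<in> Dset k \<Longrightarrow> set (labs ws) = {1..k}"
proof -
  assume a: "ws \<in> Dset k"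
  have len: "length (labs ws) = k" using a walks_labs_len by (auto simp: Dset_def)
  have d: "distinct (labs ws)" using a by (auto simp: Dset_def)
  have sub: "set (labs ws) \<subseteq> {1..k}" using a by (auto simp: Dset_def walks_def labs_def)
  have "card (set (labs ws)) = card {1..k}" using distinct_card[OF d] len by simp
  then show ?thesis using sub by (intro card_subset_eq) auto
qed

lemma card_InjS:
  assumes S: "S \<subseteq> {1..N}" "card S = k"
  shows "card (InjS N k S) = card (Dset k)"
proof -
  have finS: "finite S" using S finite_subset by blast
  have fin1: "finite (InjS N k S)" by (rule finite_subset[OF _ walks_fin]) (auto simp: InjS_def)
  have fin2: "finite (Dset k)" by (rule finite_subset[OF _ walks_fin]) (auto simp: Dset_def)
  define L where "L = sorted_list_of_set S"
  have Ls: "sorted_wrt (<) L" "set L = S" "length L = k"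
    using finS S by (auto simp: L_def strict_sorted_list_of_set)
  define g where "g i = (if i = 0 then 0 else L ! (i - 1))" for i
  have gS: "i \<in> {1..k} \<Longrightarrow> g i \<in> S" for i using Ls by (auto simp: g_def)
  have gpos: "i \<in> {1..k} \<Longrightarrow> 0 < g i" for i using gS S by fastforce
  have gmono: "strict_mono_on {..k} g"
  proof (rule strict_mono_onI)
    fix r s assume "r \<in> {..k}" "s \<in> {..k}" "r < s"
    then show "g r < g s"
      using gpos[of s] sorted_wrt_nth_less[OF Ls(1), of "r - 1" "s - 1"] Ls(3)
      by (cases "r = 0") (auto simp: g_def)
  qed
  have gimg: "g ` {1..k} = S"
  proof
    show "g ` {1..k} \<subseteq> S" using gS by auto
    show "S \<subseteq> g ` {1..k}"
    proof
      fix x assume "x \<in> S"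
      then obtain i where "i < k" "L ! i = x" using Ls by (auto simp: in_set_conv_nth)
      then show "x \<in> g ` {1..k}" by (intro image_eqI[of _ _ "Suc i"]) (auto simp: g_def)
    qed
  qed
  define h where "h x = card {y \<in> S. y \<le> x}" for x
  have h0: "h 0 = 0" using S by (auto simp: h_def)
  have hmono: "strict_mono_on (insert 0 S) h"
  proof (rule strict_mono_onI)
    fix r s assume "r \<in> insert 0 S" "s \<in> insert 0 S" "r < s"
    then have "s \<in> S" by auto
    then have "s \<in> {y \<in> S. y \<le> s}" "s \<notin> {y \<in> S. y \<le> r}" using \<open>r < s\<close> by auto
    moreover have "{y \<in> S. y \<le> r} \<subseteq> {y \<in> S. y \<le> s}" using \<open>r < s\<close> by auto
    ultimately have "{y \<in> S. y \<le> r} \<subset> {y \<in> S. y \<le> s}" by (metis psubsetI)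
    then show "h r < h s" unfolding h_def by (rule psubset_card_mono[rotated]) (use finS in auto)
  qed
  have hle: "h x \<le> k" for x unfolding h_def using S(2) finS by (metis (no_types, lifting) card_mono mem_Collect_eq subsetI)
  have g0: "g 0 = 0" by (simp add: g_def)
  have ginj: "inj_on g {..k}" by (rule strict_mono_on_imp_inj_on[OF gmono])
  have hinj: "inj_on h (insert 0 S)" by (rule strict_mono_on_imp_inj_on[OF hmono])
  have "card (Dset k) \<le> card (InjS N k S)"
  proof (rule card_inj_on_le[OF _ _ fin1])
    show "inj_on (map g) (Dset k)"
    proof (rule inj_onI)
      fix a b assume ab: "a \<in> Dset k" "b \<in> Dset k" and e: "map g a = map g b"
      have "set a \<union> set b \<subseteq> {..k}" using ab by (simp add: Dset_def walks_def)
      then show "a = b" using map_inj_on[OF e inj_on_subset[OF ginj]] by blast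
    qed
    show "map g ` Dset k \<subseteq> InjS N k S"
    proof
      fix v assume "v \<in> map g ` Dset k"
      then obtain ws where ws: "ws \<in> Dset k" "v = map g ws" by auto
      have wsk: "set ws \<subseteq> {..k}" "length ws = 2 * k" "run [] ws" "distinct (labs ws)"
        using ws by (auto simp: Dset_def walks_def)
      have gpos': "\<forall>x\<in>set ws. (0 < g x) = (0 < x)"
      proof
        fix x assume "x \<in> set ws"
        then have "x \<le> k" using wsk by auto
        then show "(0 < g x) = (0 < x)" using gpos[of x] g0 by (cases "x = 0") auto
      qed
      have lv: "labs v = map g (labs ws)" using labs_map[OF gpos'] ws by simp
      have "run (map g []) (map g ws) = run [] ws" by (rule run_map[OF gmono g0]) (use wsk in auto)
      then have run: "run [] v" using wsk ws by simp
      have sv: "set v \<subseteq> {..N}"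
      proof
        fix y assume "y \<in> set v"
        then obtain x where x: "x \<in> set ws" "y = g x" using ws by auto
        show "y \<in> {..N}"
        proof (cases "x = 0")
          case True then show ?thesis using x g0 by simp
        next
          case False
          then have "x \<in> {1..k}" using x wsk by auto
          then show ?thesis using gS[of x] S x by auto
        qed
      qed
      have "distinct (map g (labs ws))"
        using wsk(4) Dset_labs[OF ws(1)] inj_on_subset[OF ginj, of "set (labs ws)"] by (simp add: distinct_map)
      then have "distinct (labs v)" using lv by simp
      moreover have "set (labs v) = S" unfolding lv using Dset_labs[OF ws(1)] gimg by simp
      ultimately show "v \<in> InjS N k S" using sv run wsk ws by (simp add: InjS_def walks_def)
    qed
  qed
  moreover have "card (InjS N k S) \<le> card (Dset k)"
  proof (rule card_inj_on_le[OF _ _ fin2])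
    have sub: "ws \<in> InjS N k S \<Longrightarrow> set ws \<subseteq> insert 0 S" for ws
      using set_ws_labs[of ws] by (auto simp: InjS_def)
    show "inj_on (map h) (InjS N k S)"
    proof (rule inj_onI)
      fix a b assume ab: "a \<in> InjS N k S" "b \<in> InjS N k S" and e: "map h a = map h b"
      have "set a \<union> set b \<subseteq> insert 0 S" using sub ab by blast
      then show "a = b" using map_inj_on[OF e inj_on_subset[OF hinj]] by blast
    qed
    show "map h ` InjS N k S \<subseteq> Dset k"
    proof
      fix v assume "v \<in> map h ` InjS N k S"
      then obtain ws where ws: "ws \<in> InjS N k S" "v = map h ws" by auto
      have wsk: "length ws = 2 * k" "run [] ws" "distinct (labs ws)" "set (labs ws) = S"
        using ws by (auto simp: InjS_def walks_def)
      have subw: "set ws \<subseteq> insert 0 S" using sub ws by auto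
      have hpos': "\<forall>x\<in>set ws. (0 < h x) = (0 < x)"
      proof
        fix x assume "x \<in> set ws"
        then have xin: "x \<in> insert 0 S" using subw by auto
        show "(0 < h x) = (0 < x)"
          using strict_mono_on_less[OF hmono _ xin, of 0] h0 by simp
      qed
      have lv: "labs v = map h (labs ws)" using labs_map[OF hpos'] ws by simp
      have "run (map h []) (map h ws) = run [] ws" by (rule run_map[OF hmono h0]) (use subw in auto)
      then have run: "run [] v" using wsk ws by simp
      have "distinct (map h (labs ws))"
        using wsk(3,4) inj_on_subset[OF hinj, of "set (labs ws)"] by (simp add: distinct_map subset_insertI)
      then have "distinct (labs v)" using lv by simp
      moreover have "set v \<subseteq> {..k}" using ws hle by auto
      ultimately show "v \<in> Dset k" using run wsk ws by (simp add: Dset_def walks_def)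
    qed
  qed
  ultimately show ?thesis by simp
qed

lemma card_Inj:
  "card {ws \<in> walks N (2*k) []. distinct (labs ws)} = (N choose k) * card (Dset k)"
proof -
  let ?SS = "{S. S \<subseteq> {1..N} \<and> card S = k}"
  have eq: "{ws \<in> walks N (2*k) []. distinct (labs ws)} = (\<Union>S\<in>?SS. InjS N k S)"
  proof
    show "{ws \<in> walks N (2*k) []. distinct (labs ws)} \<subseteq> (\<Union>S\<in>?SS. InjS N k S)"
    proof
      fix ws assume a: "ws \<in> {ws \<in> walks N (2*k) []. distinct (labs ws)}"
      have "set (labs ws) \<subseteq> {1..N}" using a by (auto simp: walks_def labs_def)
      moreover have "card (set (labs ws)) = k" using a walks_labs_len distinct_card by auto
      ultimately show "ws \<in> (\<Union>S\<in>?SS. InjS N k S)" using a by (auto simp: InjS_def)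
    qed
  qed (auto simp: InjS_def)
  have "card (\<Union>S\<in>?SS. InjS N k S) = (\<Sum>S\<in>?SS. card (InjS N k S))"
    by (rule card_UN_disjoint)
       (auto simp: InjS_def intro: finite_subset[OF _ walks_fin])
  also have "\<dots> = (\<Sum>S\<in>?SS. card (Dset k))" by (rule sum.cong) (auto simp: card_InjS)
  also have "\<dots> = (N choose k) * card (Dset k)" using n_subsets[of "{1..N}" k] by simp
  finally show ?thesis using eq by simp
qed

lemma pos_inj:
  "map (\<lambda>x. 0 < x) a = map (\<lambda>x. 0 < x) b \<Longrightarrow> labs a = labs (b::nat list) \<Longrightarrow> a = b"
proof (induction a arbitrary: b)
  case Nil then show ?case by simp
next
  case (Cons x a)
  then obtain y b' where b: "b = y # b'" by (cases b) auto
  show ?case using Cons b by (cases "0 < x"; cases "0 < y") (auto simp: labs_def)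
qed

definition Dist :: "nat \<Rightarrow> nat \<Rightarrow> nat" where
  "Dist N k = card {xs. length xs = k \<and> distinct xs \<and> set xs \<subseteq> {1..N}}"

lemma Dist_eq: "k \<le> N \<Longrightarrow> Dist N k = fact k * (N choose k)"
proof -
  assume kN: "k \<le> N"
  have "Dist N k = \<Prod>{N - k + 1..N}" unfolding Dist_def
    using card_lists_distinct_length_eq[of "{1..N}" k] kN by simp
  also have "\<dots> = fact N div fact (N - k)" using fact_div_fact[of "N - k" N] kN by simp
  also have "fact N = fact k * (N choose k) * fact (N - k)"
    using binomial_fact_lemma[OF kN] by (simp add: mult_ac)
  finally show ?thesis by simp
qed

lemma Dist_le: "Dist N k \<le> N ^ k"
proof -
  have "Dist N k \<le> card {xs. set xs \<subseteq> {1..N} \<and> length xs = k}"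
    unfolding Dist_def by (rule card_mono[OF finite_lists_length_eq]) auto
  then show ?thesis by (simp add: card_lists_length_eq)
qed

lemma card_NonInj:
  "card {ws \<in> walks N (2*k) []. \<not> distinct (labs ws)} \<le> 2 ^ (2*k) * (N ^ k - Dist N k)"
proof -
  let ?A = "{bs::bool list. set bs \<subseteq> UNIV \<and> length bs = 2*k}"
  let ?B = "{xs. set xs \<subseteq> {1..N} \<and> length xs = k} - {xs. length xs = k \<and> distinct xs \<and> set xs \<subseteq> {1..N}}"
  have "card {ws \<in> walks N (2*k) []. \<not> distinct (labs ws)} \<le> card (?A \<times> ?B)"
  proof (rule card_inj_on_le)
    show "inj_on (\<lambda>ws. (map (\<lambda>x. 0 < x) ws, labs ws)) {ws \<in> walks N (2*k) []. \<not> distinct (labs ws)}"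
      by (rule inj_onI) (auto intro: pos_inj)
    show "(\<lambda>ws. (map (\<lambda>x. 0 < x) ws, labs ws)) ` {ws \<in> walks N (2*k) []. \<not> distinct (labs ws)} \<subseteq> ?A \<times> ?B"
      using walks_labs_len by (auto simp: walks_def labs_def)
    show "finite (?A \<times> ?B)" by (intro finite_cartesian_product finite_Diff finite_lists_length_eq) auto
  qed
  also have "card (?A \<times> ?B) = 2 ^ (2*k) * (N ^ k - Dist N k)"
  proof -
    have fin: "finite {xs. length xs = k \<and> distinct xs \<and> set xs \<subseteq> {1..N}}"
      by (rule finite_subset[OF _ finite_lists_length_eq[of "{1..N}" k]]) auto
    have "card ?A = 2 ^ (2*k)" using card_lists_length_eq[of "UNIV::bool set" "2*k"] by (simp add: card_UNIV_bool)
    moreover have "card ?B = N ^ k - Dist N k" unfolding Dist_def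
      by (subst card_Diff_subset[OF fin]) (auto simp: card_lists_length_eq)
    ultimately show ?thesis by (simp add: card_cartesian_product)
  qed
  finally show ?thesis .
qed

lemma card_walks_split:
  "card (walks N (2*k) []) = (N choose k) * card (Dset k) + card {ws \<in> walks N (2*k) []. \<not> distinct (labs ws)}"
proof -
  have "walks N (2*k) [] = {ws \<in> walks N (2*k) []. distinct (labs ws)} \<union> {ws \<in> walks N (2*k) []. \<not> distinct (labs ws)}"
    by auto
  then have "card (walks N (2*k) []) = card {ws \<in> walks N (2*k) []. distinct (labs ws)} + card {ws \<in> walks N (2*k) []. \<not> distinct (labs ws)}"
    by (metis (no_types, lifting) card_Un_disjoint disjoint_iff finite_Un mem_Collect_eq walks_fin)
  then show ?thesis by (simp add: card_Inj)
qed

lemma choose_lim: "(\<lambda>N. real (N choose k) / real N ^ k) \<longlonglongrightarrow> 1 / fact k"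
proof -
  have e: "real (N choose k) / real N ^ k = (\<Prod>i\<in>{0..<k}. (1 - real i / real N)) / fact k" if "N > 0" for N
  proof -
    have "real (N choose k) * fact k = (\<Prod>i = 0..<k. real N - real i)"
      using gbinomial_mult_fact'[of "real N" k] by (simp add: binomial_gbinomial)
    also have "\<dots> = (\<Prod>i = 0..<k. (1 - real i / real N) * real N)"
      using that by (intro prod.cong) (auto simp: field_simps)
    also have "\<dots> = (\<Prod>i = 0..<k. (1 - real i / real N)) * real N ^ k"
      by (simp add: prod.distrib)
    finally show ?thesis using that fact_nonzero[where 'a=real, of k] by (simp add: field_simps)
  qed
  have "(\<lambda>N. (\<Prod>i\<in>{0..<k}. (1 - real i / real N)) / fact k) \<longlonglongrightarrow> (\<Prod>i\<in>{0..<k}. (1 - 0)) / fact k"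
    by (intro tendsto_intros) auto
  then have "(\<lambda>N. (\<Prod>i\<in>{0..<k}. (1 - real i / real N)) / fact k) \<longlonglongrightarrow> 1 / fact k" by simp
  then show ?thesis
    by (rule Lim_transform_eventually) (auto intro!: eventually_sequentiallyI[of 1] simp: e)
qed

lemma vac_even_lim: "(\<lambda>N. vac (omegaN N ^^ (2 * k))) \<longlonglongrightarrow> real (card (Dset k)) / fact k"
proof -
  define b where "b N = real (N choose k) / real N ^ k" for N
  define R where "R N = real (card {ws \<in> walks N (2*k) []. \<not> distinct (labs ws)}) / real N ^ k" for N
  have v: "vac (omegaN N ^^ (2 * k)) = b N * real (card (Dset k)) + R N" for N
    unfolding vac_even b_def R_def card_walks_split by (simp add: add_divide_distrib)
  have bl: "b \<longlonglongrightarrow> 1 / fact k" unfolding b_def[abs_def] by (rule choose_lim)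
  have R0: "R \<longlonglongrightarrow> 0"
  proof (rule real_tendsto_sandwich)
    show "eventually (\<lambda>N. 0 \<le> R N) sequentially" by (simp add: R_def)
    show "eventually (\<lambda>N. R N \<le> 2 ^ (2*k) * (1 - fact k * b N)) sequentially"
    proof (rule eventually_sequentiallyI[of "Suc k"])
      fix N assume N: "Suc k \<le> N"
      then have Npos: "real N ^ k > 0" by simp
      have "real (card {ws \<in> walks N (2*k) []. \<not> distinct (labs ws)}) \<le> 2 ^ (2*k) * (real (N ^ k) - real (Dist N k))"
      proof -
        have "real (card {ws \<in> walks N (2*k) []. \<not> distinct (labs ws)}) \<le> real (2 ^ (2*k) * (N ^ k - Dist N k))"
          using card_NonInj[of N k] of_nat_mono by blast
        also have "\<dots> = 2 ^ (2*k) * (real (N ^ k) - real (Dist N k))"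
          using Dist_le[of N k] by (simp add: of_nat_diff)
        finally show ?thesis .
      qed
      then have "R N \<le> 2 ^ (2*k) * (real (N ^ k) - real (Dist N k)) / real N ^ k"
        unfolding R_def using Npos by (simp add: divide_right_mono)
      also have "\<dots> = 2 ^ (2*k) * (1 - fact k * b N)"
        using Dist_eq[of k N] N Npos by (simp add: b_def field_simps)
      finally show "R N \<le> 2 ^ (2*k) * (1 - fact k * b N)" .
    qed
    show "(\<lambda>N. 0) \<longlonglongrightarrow> (0::real)" by simp
    have "(\<lambda>N. 2 ^ (2*k) * (1 - fact k * b N)) \<longlonglongrightarrow> 2 ^ (2*k) * (1 - fact k * (1 / fact k))"
      by (intro tendsto_intros bl)
    then show "(\<lambda>N. 2 ^ (2*k) * (1 - fact k * b N)) \<longlonglongrightarrow> (0::real)" by simp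
  qed
  have "(\<lambda>N. b N * real (card (Dset k)) + R N) \<longlonglongrightarrow> 1 / fact k * real (card (Dset k)) + 0"
    by (intro tendsto_intros bl R0)
  then show ?thesis by (simp add: v)
qed

fun stk :: "nat list \<Rightarrow> nat \<Rightarrow> nat list" where
  "stk ws 0 = []"
| "stk ws (Suc t) = (if 0 < ws ! t then Suc t # stk ws t else tl (stk ws t))"

definition lab :: "nat list \<Rightarrow> nat \<Rightarrow> nat" where
  "lab ws p = ws ! (p - 1)"

definition dyck :: "nat list \<Rightarrow> bool" where
  "dyck ws \<longleftrightarrow> (\<forall>t<length ws. ws ! t = 0 \<longrightarrow> stk ws t \<noteq> []) \<and> stk ws (length ws) = []"

definition valid :: "nat list \<Rightarrow> bool" where
  "valid ws \<longleftrightarrow> dyck ws \<and> (\<forall>t<length ws. 0 < ws ! t \<longrightarrow> vword (map (lab ws) (stk ws (Suc t))))"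

lemma set_tl_sub: "x \<in> set (tl xs) \<Longrightarrow> x \<in> set xs"
  by (cases xs) auto

lemma stk_mem: "x \<in> set (stk ws t) \<Longrightarrow> 1 \<le> x \<and> x \<le> t \<and> 0 < ws ! (x - 1)"
  by (induction t) (auto split: if_splits dest: set_tl_sub)

lemma stk_sorted: "sorted_wrt (>) (stk ws t)"
proof (induction t)
  case 0 then show ?case by simp
next
  case (Suc t)
  then show ?case using stk_mem[of _ ws t]
    by (cases "stk ws t") (auto simp: less_Suc_eq_le)
qed

lemma stk_distinct: "distinct (stk ws t)"
  using stk_sorted[of ws t] by (simp add: sorted_wrt_iff_nth_less distinct_conv_nth) (metis less_irrefl nat_neq_iff)

lemma stk_hd_max: "stk ws t = a # r \<Longrightarrow> y \<in> set r \<Longrightarrow> y < a"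
  using stk_sorted[of ws t] by auto

lemma stk_le_hd: "y \<in> set (stk ws t) \<Longrightarrow> y \<le> hd (stk ws t)"
  using stk_sorted[of ws t] by (cases "stk ws t") auto

lemma M1: "x \<in> set (stk ws t') \<Longrightarrow> x \<le> t \<Longrightarrow> t \<le> t' \<Longrightarrow> x \<in> set (stk ws t)"
proof (induction t' arbitrary: t)
  case 0 then show ?case by simp
next
  case (Suc t')
  show ?case
  proof (cases "t = Suc t'")
    case True then show ?thesis using Suc by simp
  next
    case False
    then have "t \<le> t'" using Suc by simp
    have "x \<in> set (stk ws t')"
      using Suc.prems \<open>t \<le> t'\<close> by (auto split: if_splits dest: set_tl_sub)
    then show ?thesis using Suc.IH \<open>t \<le> t'\<close> Suc.prems by blast
  qed
qed

lemma M2: "t \<le> t' \<Longrightarrow> x \<in> set (stk ws t) \<Longrightarrow> x \<in> set (stk ws t') \<Longrightarrow>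
   filter (\<lambda>y. y \<le> x) (stk ws t') = filter (\<lambda>y. y \<le> x) (stk ws t)"
proof (induction t' rule: dec_induct)
  case base then show ?case by simp
next
  case (step u)
  have xu: "x \<in> set (stk ws u)" using M1[OF step.prems(2)] step.hyps stk_mem[OF step.prems(1)] by simp
  have xle: "x \<le> u" using stk_mem[OF xu] by simp
  show ?case
  proof (cases "0 < ws ! u")
    case True
    then show ?thesis using step.IH[OF step.prems(1) xu] xle by simp
  next
    case False
    then have e: "stk ws (Suc u) = tl (stk ws u)" by simp
    obtain a r where ar: "stk ws u = a # r" using xu by (cases "stk ws u") auto
    have "x \<in> set r" using step.prems e ar by simp
    then have "x < a" using stk_hd_max[OF ar] by simp
    then show ?thesis using step.IH[OF step.prems(1) xu] e ar by simp
  qed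
qed

lemma run_valid_gen:
  "m \<le> length ws \<Longrightarrow> run (map (lab ws) (stk ws m)) (drop m ws) \<longleftrightarrow>
    (\<forall>t. m \<le> t \<and> t < length ws \<longrightarrow> (ws ! t = 0 \<longrightarrow> stk ws t \<noteq> []) \<and>
        (0 < ws ! t \<longrightarrow> vword (map (lab ws) (stk ws (Suc t))))) \<and> stk ws (length ws) = []"
proof (induction "length ws - m" arbitrary: m)
  case 0
  then have "m = length ws" by simp
  then show ?case by auto
next
  case (Suc d)
  then have m: "m < length ws" by simp
  have IH: "run (map (lab ws) (stk ws (Suc m))) (drop (Suc m) ws) \<longleftrightarrow>
    (\<forall>t. Suc m \<le> t \<and> t < length ws \<longrightarrow> (ws ! t = 0 \<longrightarrow> stk ws t \<noteq> []) \<and>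
        (0 < ws ! t \<longrightarrow> vword (map (lab ws) (stk ws (Suc t))))) \<and> stk ws (length ws) = []"
    by (rule Suc.hyps(1)) (use Suc.hyps(2) m in auto)
  have dr: "drop m ws = ws ! m # drop (Suc m) ws" using m by (simp add: Cons_nth_drop_Suc)
  have split: "(\<forall>t. m \<le> t \<and> t < length ws \<longrightarrow> Q t) \<longleftrightarrow> Q m \<and> (\<forall>t. Suc m \<le> t \<and> t < length ws \<longrightarrow> Q t)" for Q
    using m by (metis Suc_le_eq le_eq_less_or_eq)
  show ?case
  proof (cases "ws ! m = 0")
    case True
    then show ?thesis unfolding dr split using IH by (simp add: map_tl)
  next
    case False
    have "map (lab ws) (stk ws (Suc m)) = ws ! m # map (lab ws) (stk ws m)"
      using False by (simp add: lab_def)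
    then show ?thesis unfolding dr split using IH False by simp
  qed
qed

lemma run_valid: "run [] ws \<longleftrightarrow> valid ws"
  using run_valid_gen[of 0 ws] by (auto simp: valid_def dyck_def)

definition Pof :: "nat list \<Rightarrow> nat set set" where
  "Pof ws = {{hd (stk ws t), Suc t} | t. t < length ws \<and> ws ! t = 0}"

lemma ex_step: "a \<le> b \<Longrightarrow> P (a::nat) \<Longrightarrow> \<not> P b \<Longrightarrow> \<exists>t. a \<le> t \<and> t < b \<and> P t \<and> \<not> P (Suc t)"
proof (induction b rule: dec_induct)
  case base then show ?case by simp
next
  case (step n)
  then show ?case by (cases "P n") (auto intro: le_SucI)
qed

lemma stk_push: "0 < ws ! (s - 1) \<Longrightarrow> 1 \<le> s \<Longrightarrow> stk ws s = s # stk ws (s - 1)"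
  by (cases s) auto

context
  fixes ws :: "nat list"
  assumes dy: "dyck ws"
begin

lemma closer_hd:
  assumes "t < length ws" "ws ! t = 0"
  shows "stk ws t \<noteq> []" "hd (stk ws t) \<in> set (stk ws t)" "hd (stk ws t) \<le> t"
    "1 \<le> hd (stk ws t)" "0 < ws ! (hd (stk ws t) - 1)"
proof -
  show ne: "stk ws t \<noteq> []" using dy assms by (auto simp: dyck_def)
  show h: "hd (stk ws t) \<in> set (stk ws t)" using ne by simp
  show "hd (stk ws t) \<le> t" "1 \<le> hd (stk ws t)" "0 < ws ! (hd (stk ws t) - 1)"
    using stk_mem[OF h] by auto
qed

lemma not_after:
  assumes "t < length ws" "ws ! t = 0" "t < t'"
  shows "hd (stk ws t) \<notin> set (stk ws t')"
proof
  let ?q = "hd (stk ws t)"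
  assume a: "?q \<in> set (stk ws t')"
  have "?q \<le> Suc t" using closer_hd(3)[OF assms(1,2)] by simp
  then have "?q \<in> set (stk ws (Suc t))" using M1[OF a, of "Suc t"] assms by simp
  moreover have "stk ws (Suc t) = tl (stk ws t)" using assms by simp
  moreover obtain r where "stk ws t = ?q # r" using closer_hd(1)[OF assms(1,2)] by (cases "stk ws t") auto
  ultimately show False using stk_distinct[of ws t] by (metis distinct.simps(2) list.sel(3))
qed

lemma mem_iff:
  assumes "t0 < length ws" "ws ! t0 = 0"
  shows "hd (stk ws t0) \<in> set (stk ws t) \<longleftrightarrow> hd (stk ws t0) \<le> t \<and> t < Suc t0"
proof
  assume a: "hd (stk ws t0) \<in> set (stk ws t)"
  have "\<not> t0 < t" using not_after[OF assms, of t] a by blast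
  then show "hd (stk ws t0) \<le> t \<and> t < Suc t0"
    using stk_mem[OF a] by linarith
next
  assume "hd (stk ws t0) \<le> t \<and> t < Suc t0"
  then show "hd (stk ws t0) \<in> set (stk ws t)"
    using M1[OF closer_hd(2)[OF assms]] by simp
qed

lemma PofE:
  assumes "B \<in> Pof ws"
  obtains t where "t < length ws" "ws ! t = 0" "B = {Min B, Max B}" "Min B = hd (stk ws t)"
    "Max B = Suc t" "Min B < Max B"
proof -
  obtain t where t: "t < length ws" "ws ! t = 0" "B = {hd (stk ws t), Suc t}"
    using assms by (auto simp: Pof_def)
  have le: "hd (stk ws t) < Suc t" using closer_hd(3)[OF t(1,2)] by simp
  then have "Min B = hd (stk ws t)" "Max B = Suc t" using t(3) by auto
  then show ?thesis using that t le by auto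
qed

lemma blk_props:
  assumes "B \<in> Pof ws"
  shows "B = {Min B, Max B}" "Min B < Max B" "1 \<le> Min B" "Max B \<le> length ws"
    "0 < ws ! (Min B - 1)" "ws ! (Max B - 1) = 0" "hd (stk ws (Max B - 1)) = Min B"
    "\<And>t. Min B \<in> set (stk ws t) \<longleftrightarrow> Min B \<le> t \<and> t < Max B"
    "Min B \<in> set (stk ws (Min B))"
proof -
  obtain t where t: "t < length ws" "ws ! t = 0" "B = {Min B, Max B}" "Min B = hd (stk ws t)"
    "Max B = Suc t" "Min B < Max B" using PofE[OF assms] .
  show "B = {Min B, Max B}" "Min B < Max B" "Max B \<le> length ws" "ws ! (Max B - 1) = 0"
    "hd (stk ws (Max B - 1)) = Min B" using t by auto
  show "1 \<le> Min B" "0 < ws ! (Min B - 1)" using closer_hd[OF t(1,2)] t by auto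
  show "\<And>t'. Min B \<in> set (stk ws t') \<longleftrightarrow> Min B \<le> t' \<and> t' < Max B"
    using mem_iff[OF t(1,2)] t by simp
  then show "Min B \<in> set (stk ws (Min B))" using t by simp
qed

lemma opener_blk:
  assumes "1 \<le> s" "s \<le> length ws" "0 < ws ! (s - 1)"
  shows "\<exists>B\<in>Pof ws. Min B = s"
proof -
  have "s \<in> set (stk ws s)" using stk_push[OF assms(3,1)] by simp
  moreover have "s \<notin> set (stk ws (length ws))" using dy by (simp add: dyck_def)
  ultimately obtain t where t: "s \<le> t" "t < length ws" "s \<in> set (stk ws t)" "s \<notin> set (stk ws (Suc t))"
    using ex_step[of s "length ws" "\<lambda>t. s \<in> set (stk ws t)"] assms by blast
  have w: "ws ! t = 0" using t by (auto split: if_splits)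
  then have "stk ws (Suc t) = tl (stk ws t)" by simp
  then have "hd (stk ws t) = s" using t(3,4) by (cases "stk ws t") auto
  moreover have "{hd (stk ws t), Suc t} \<in> Pof ws" using t w by (auto simp: Pof_def)
  moreover have "Min {hd (stk ws t), Suc t} = hd (stk ws t)" using closer_hd(3)[OF t(2) w] by simp
  ultimately show ?thesis by metis
qed

lemma blk_eq_Min:
  assumes "B \<in> Pof ws" "C \<in> Pof ws" "Min B = Min C"
  shows "B = C"
proof -
  have "Max B = Max C"
  proof (rule ccontr)
    assume "Max B \<noteq> Max C"
    then consider "Max B < Max C" | "Max C < Max B" by linarith
    then show False
    proof cases
      case 1
      then have "Min C \<in> set (stk ws (Max B))" using blk_props(2,8)[OF assms(2)] blk_props(2)[OF assms(1)] assms(3) by simp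
      then show False using blk_props(8)[OF assms(1), of "Max B"] assms(3) by simp
    next
      case 2
      then have "Min B \<in> set (stk ws (Max C))" using blk_props(2,8)[OF assms(1)] blk_props(2)[OF assms(2)] assms(3) by simp
      then show False using blk_props(8)[OF assms(2), of "Max C"] assms(3) by simp
    qed
  qed
  then show ?thesis using blk_props(1)[OF assms(1)] blk_props(1)[OF assms(2)] assms(3) by metis
qed

lemma blk_eq_Max:
  assumes "B \<in> Pof ws" "C \<in> Pof ws" "Max B = Max C"
  shows "B = C"
  using blk_props(1,7)[OF assms(1)] blk_props(1,7)[OF assms(2)] assms(3) by metis

lemma Pof_partition: "pair_partition (length ws) (Pof ws)"
  unfolding pair_partition_def
proof (intro conjI ballI partition_onI)
  show "\<Union>(Pof ws) = {1..length ws}"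
  proof
    show "\<Union>(Pof ws) \<subseteq> {1..length ws}"
    proof
      fix x assume "x \<in> \<Union>(Pof ws)"
      then obtain B where B: "B \<in> Pof ws" "x \<in> B" by auto
      then show "x \<in> {1..length ws}" using blk_props(1-4)[OF B(1)] by (auto simp del: insert_iff) (metis insertE empty_iff le_trans less_imp_le le_less_trans)+
    qed
    show "{1..length ws} \<subseteq> \<Union>(Pof ws)"
    proof
      fix x assume x: "x \<in> {1..length ws}"
      show "x \<in> \<Union>(Pof ws)"
      proof (cases "ws ! (x - 1) = 0")
        case True
        then have "{hd (stk ws (x - 1)), Suc (x - 1)} \<in> Pof ws" using x by (auto simp: Pof_def)
        then show ?thesis using x by auto
      next
        case False
        then obtain B where "B \<in> Pof ws" "Min B = x" using opener_blk[of x] x by auto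
        then show ?thesis using blk_props(1)[of B] by (metis UnionI insertI1)
      qed
    qed
  qed
  show "disjnt p q" if "p \<in> Pof ws" "q \<in> Pof ws" "p \<noteq> q" for p q
  proof -
    have "Min p \<noteq> Min q" "Max p \<noteq> Max q" using blk_eq_Min blk_eq_Max that by blast+
    moreover have "Min p \<noteq> Max q" "Max p \<noteq> Min q"
      using blk_props(5,6)[OF that(1)] blk_props(5,6)[OF that(2)] by auto
    ultimately show ?thesis using blk_props(1)[OF that(1)] blk_props(1)[OF that(2)]
      by (metis disjnt_insert1 disjnt_insert2 disjnt_empty1 insert_iff empty_iff)
  qed
  show "{} \<notin> Pof ws" by (auto simp: Pof_def)
  show "card B = 2" if "B \<in> Pof ws" for B
    using blk_props(1,2)[OF that] by (metis card_2_iff less_irrefl)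
qed

lemma Pof_noncrossing: "noncrossing (Pof ws)"
  unfolding noncrossing_def
proof (intro ballI notI)
  fix B C assume B: "B \<in> Pof ws" and C: "C \<in> Pof ws" and c: "Min B < Min C \<and> Min C < Max B \<and> Max B < Max C"
  have "Min C \<in> set (stk ws (Max B - 1))" using blk_props(8)[OF C, of "Max B - 1"] c by auto
  then have "Min C \<le> Min B" using stk_le_hd blk_props(7)[OF B] by metis
  then show False using c by simp
qed

end

definition chain :: "nat set set \<Rightarrow> nat set list \<Rightarrow> bool" where
  "chain P Bs \<longleftrightarrow> (\<forall>j. Suc j < length Bs \<longrightarrow> nearest_outer P (Bs ! j) (Bs ! Suc j))"

lemma chain_Cons: "chain P (B # C # Bs) \<longleftrightarrow> nearest_outer P B C \<and> chain P (C # Bs)"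
  unfolding chain_def
proof safe
  fix j assume "\<forall>j. Suc j < length (B # C # Bs) \<longrightarrow> nearest_outer P ((B # C # Bs) ! j) ((B # C # Bs) ! Suc j)"
    "Suc j < length (C # Bs)"
  then show "nearest_outer P ((C # Bs) ! j) ((C # Bs) ! Suc j)" by (metis Suc_less_eq length_Cons nth_Cons_Suc)
next
  fix j assume "nearest_outer P B C" "\<forall>j. Suc j < length (C # Bs) \<longrightarrow> nearest_outer P ((C # Bs) ! j) ((C # Bs) ! Suc j)"
    "Suc j < length (B # C # Bs)"
  then show "nearest_outer P ((B # C # Bs) ! j) ((B # C # Bs) ! Suc j)" by (cases j) auto
qed (auto dest: spec[of _ 0])

lemma chain_single: "chain P [B]"
  by (simp add: chain_def)

context
  fixes ws :: "nat list"
  assumes dy: "dyck ws"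
begin

lemma top_outer:
  assumes B: "B \<in> Pof ws" and ne: "stk ws (Min B - 1) \<noteq> []"
  shows "\<exists>D\<in>Pof ws. Min D = hd (stk ws (Min B - 1)) \<and> inside B D \<and>
           (\<forall>E\<in>Pof ws. inside B E \<longrightarrow> Min E \<le> Min D)"
proof -
  let ?s = "Min B" and ?p = "hd (stk ws (Min B - 1))"
  have pin: "?p \<in> set (stk ws (?s - 1))" using ne by simp
  note pm = stk_mem[OF pin]
  have sB: "1 \<le> ?s" "?s < Max B" "Max B \<le> length ws" "0 < ws ! (?s - 1)"
    using blk_props[OF dy B] by auto
  obtain D where D: "D \<in> Pof ws" "Min D = ?p"
    using opener_blk[OF dy, of ?p] pm sB by force
  have "?s - 1 < Max D" using blk_props(8)[OF dy D(1), of "?s - 1"] pin D(2) by simp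
  moreover have "Max D \<noteq> ?s" using blk_props(6)[OF dy D(1)] sB(4) by auto
  ultimately have MD: "?s < Max D" by linarith
  have pD: "?p < ?s" using pm sB by linarith
  have "\<not> (Min D < Min B \<and> Min B < Max D \<and> Max D < Max B)"
    using Pof_noncrossing[OF dy] D(1) B unfolding noncrossing_def by blast
  then have "Max D \<ge> Max B" using MD pD D(2) by linarith
  moreover have "Max D \<noteq> Max B" using blk_eq_Max[OF dy D(1) B] D(2) pD by auto
  ultimately have "Max B < Max D" by simp
  then have ins: "inside B D" using pD D(2) by (simp add: inside_def)
  have "Min E \<le> Min D" if E: "E \<in> Pof ws" "inside B E" for E
  proof -
    have "Min E \<in> set (stk ws (?s - 1))"
      using blk_props(8)[OF dy E(1), of "?s - 1"] E(2) sB unfolding inside_def by auto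
    then show ?thesis using stk_le_hd D(2) by metis
  qed
  then show ?thesis using D ins by blast
qed

lemma outer_exists:
  assumes B: "B \<in> Pof ws"
  shows "stk ws (Min B) = [Min B] \<or> (\<exists>C. nearest_outer (Pof ws) B C)"
proof (cases "stk ws (Min B - 1) = []")
  case True
  then show ?thesis using stk_push[of ws "Min B"] blk_props(3,5)[OF dy B] by simp
next
  case False
  obtain D where D: "D \<in> Pof ws" "inside B D" "\<forall>E\<in>Pof ws. inside B E \<longrightarrow> Min E \<le> Min D"
    using top_outer[OF B False] by blast
  have "nearest_outer (Pof ws) B D"
    unfolding nearest_outer_def using B D by (auto simp: inside_def)
  then show ?thesis by blast
qed

lemma outer_stk:
  assumes no: "nearest_outer (Pof ws) B C"
  shows "stk ws (Min B) = Min B # stk ws (Min C)"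
proof -
  have B: "B \<in> Pof ws" and C: "C \<in> Pof ws" and ins: "inside B C"
    and none: "\<not> (\<exists>D\<in>Pof ws. inside B D \<and> inside D C)" using no by (auto simp: nearest_outer_def)
  let ?s = "Min B"
  have sB: "1 \<le> ?s" "?s < Max B" "0 < ws ! (?s - 1)" using blk_props[OF dy B] by auto
  have cin: "Min C \<in> set (stk ws (?s - 1))"
    using blk_props(8)[OF dy C, of "?s - 1"] ins sB unfolding inside_def by auto
  then have ne: "stk ws (?s - 1) \<noteq> []" by auto
  obtain D where D: "D \<in> Pof ws" "Min D = hd (stk ws (?s - 1))" "inside B D"
    "\<forall>E\<in>Pof ws. inside B E \<longrightarrow> Min E \<le> Min D"
    using top_outer[OF B ne] by blast
  have le: "Min C \<le> Min D" using D(4) C ins by blast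
  have eq: "Min C = Min D"
  proof (rule ccontr)
    assume "Min C \<noteq> Min D"
    then have lt: "Min C < Min D" using le by simp
    have "Min D < Max C" using D(3) ins blk_props(2)[OF dy B] unfolding inside_def by linarith
    moreover have "\<not> (Min C < Min D \<and> Min D < Max C \<and> Max C < Max D)"
      using Pof_noncrossing[OF dy] D(1) C unfolding noncrossing_def by blast
    moreover have "Max C \<noteq> Max D" using blk_eq_Max[OF dy C D(1)] lt by auto
    ultimately have "Max D < Max C" using lt by linarith
    then have "inside D C" using lt by (simp add: inside_def)
    then show False using none D(1,3) by blast
  qed
  have "stk ws (?s - 1) = filter (\<lambda>y. y \<le> Min C) (stk ws (?s - 1))"
    using stk_le_hd[of _ ws "?s - 1"] D(2) eq by (auto intro!: filter_True[symmetric])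
  also have "\<dots> = filter (\<lambda>y. y \<le> Min C) (stk ws (Min C))"
    using M2[of "Min C" "?s - 1" "Min C" ws] blk_props(9)[OF dy C] cin stk_mem[OF cin] by simp
  also have "\<dots> = stk ws (Min C)"
    using stk_mem[of _ ws "Min C"] by (auto intro!: filter_True)
  finally show ?thesis using stk_push[of ws ?s] sB by simp
qed

lemma chain_prefix:
  "Bs \<noteq> [] \<Longrightarrow> set Bs \<subseteq> Pof ws \<Longrightarrow> chain (Pof ws) Bs \<Longrightarrow>
    map Min Bs = take (length Bs) (stk ws (Min (hd Bs)))"
proof (induction Bs)
  case Nil then show ?case by simp
next
  case (Cons B Bs)
  show ?case
  proof (cases Bs)
    case Nil
    then show ?thesis using stk_push[of ws "Min B"] blk_props(3,5)[OF dy, of B] Cons.prems by simp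
  next
    case (Cons C Bs')
    then have "nearest_outer (Pof ws) B C" "chain (Pof ws) Bs"
      using chain_Cons Cons.prems(3) \<open>Bs = C # Bs'\<close> by blast+
    then show ?thesis using outer_stk Cons.IH Cons.prems \<open>Bs = C # Bs'\<close> by simp
  qed
qed

lemma stack_chain:
  "B \<in> Pof ws \<Longrightarrow> \<exists>Bs. Bs \<noteq> [] \<and> hd Bs = B \<and> set Bs \<subseteq> Pof ws \<and> chain (Pof ws) Bs \<and>
      map Min Bs = stk ws (Min B)"
proof (induction "Min B" arbitrary: B rule: less_induct)
  case less
  show ?case
  proof (cases "stk ws (Min B) = [Min B]")
    case True
    then show ?thesis using less.prems chain_single by (intro exI[of _ "[B]"]) auto
  next
    case False
    then obtain C where C: "nearest_outer (Pof ws) B C" using outer_exists[OF less.prems] by blast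
    then have Cin: "C \<in> Pof ws" and lt: "Min C < Min B" by (auto simp: nearest_outer_def inside_def)
    obtain Bs where Bs: "Bs \<noteq> []" "hd Bs = C" "set Bs \<subseteq> Pof ws" "chain (Pof ws) Bs"
      "map Min Bs = stk ws (Min C)" using less.hyps[OF lt Cin] by blast
    obtain Bs' where Bs': "Bs = C # Bs'" using Bs(1,2) by (cases Bs) auto
    have "chain (Pof ws) (B # Bs)" using chain_Cons C Bs(4) Bs' by blast
    then show ?thesis using Bs less.prems outer_stk[OF C] by (intro exI[of _ "B # Bs"]) auto
  qed
qed

end

lemma vword_take: "vword w \<Longrightarrow> vword (take r w)"
proof -
  assume v: "vword w"
  show ?thesis
  proof (cases "take r w = []")
    case True then show ?thesis by (subst True) (simp add: vword_def)
  next
    case False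
    have wne: "w \<noteq> []" using False by auto
    have pos: "\<forall>i\<in>set w. 0 < i" using v by (simp add: vword_def)
    obtain m where m: "m < length w"
      "\<forall>j. Suc j \<le> m \<longrightarrow> w ! j > w ! Suc j"
      "\<forall>j. m \<le> j \<and> Suc j < length w \<longrightarrow> w ! j < w ! Suc j"
      using v wne unfolding vword_def by blast
    let ?l = "length (take r w)"
    have l: "0 < ?l" using False by simp
    show ?thesis unfolding vword_def
    proof (intro conjI disjI2)
      show "\<forall>i\<in>set (take r w). 0 < i" using pos by (auto dest: in_set_takeD)
      show "\<exists>m<length (take r w). (\<forall>j. Suc j \<le> m \<longrightarrow> take r w ! j > take r w ! Suc j) \<and>
          (\<forall>j. m \<le> j \<and> Suc j < length (take r w) \<longrightarrow> take r w ! j < take r w ! Suc j)"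
      proof (rule exI[of _ "min m (?l - 1)"], intro conjI allI impI)
        show "min m (?l - 1) < ?l" using l by linarith
      next
        fix j assume "Suc j \<le> min m (?l - 1)"
        then show "take r w ! j > take r w ! Suc j" using m(2) l by auto
      next
        fix j assume "min m (?l - 1) \<le> j \<and> Suc j < ?l"
        then show "take r w ! j < take r w ! Suc j" using m(3) by auto
      qed
    qed
  qed
qed

definition blk :: "nat set set \<Rightarrow> nat \<Rightarrow> nat set" where
  "blk P t = (THE B. B \<in> P \<and> t \<in> B)"

definition Phi :: "nat \<Rightarrow> nat set set \<Rightarrow> (nat set \<Rightarrow> nat) \<Rightarrow> nat list" where
  "Phi n P f = map (\<lambda>t. if t = Min (blk P t) then f (blk P t) else 0) [1..<Suc n]"

context
  fixes n :: nat and P :: "nat set set"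
  assumes pp: "pair_partition n P"
begin

lemma blkP:
  assumes "B \<in> P"
  shows "B = {Min B, Max B}" "Min B < Max B" "1 \<le> Min B" "Max B \<le> n"
proof -
  have c: "card B = 2" using pp assms by (auto simp: pair_partition_def)
  then obtain x y where xy: "B = {x, y}" "x \<noteq> y" by (auto simp: card_2_iff)
  then show "B = {Min B, Max B}" "Min B < Max B" by (cases "x < y"; auto simp: min_def max_def)+
  have "B \<subseteq> {1..n}" using pp assms by (auto simp: pair_partition_def partition_on_def)
  then show "1 \<le> Min B" "Max B \<le> n" using xy by auto
qed

lemma P_uniq: "B \<in> P \<Longrightarrow> C \<in> P \<Longrightarrow> t \<in> B \<Longrightarrow> t \<in> C \<Longrightarrow> B = C"
  using pp unfolding pair_partition_def partition_on_def pairwise_def disjnt_def by blast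

lemma blk_fin: "B \<in> P \<Longrightarrow> finite B \<and> B \<noteq> {}"
  using pp by (auto simp: pair_partition_def intro: card_ge_0_finite)

lemma MinIn: "B \<in> P \<Longrightarrow> Min B \<in> B"
  using blk_fin Min_in by blast

lemma MaxIn: "B \<in> P \<Longrightarrow> Max B \<in> B"
  using blk_fin Max_in by blast

lemma blk_mem: "B \<in> P \<Longrightarrow> x \<in> B \<longleftrightarrow> x = Min B \<or> x = Max B"
proof -
  assume B: "B \<in> P"
  have e: "B = {Min B, Max B}" by (rule blkP(1)[OF B])
  have "x \<in> B \<longleftrightarrow> x \<in> {Min B, Max B}" using e by (rule arg_cong[where f="\<lambda>S. x \<in> S"])
  then show ?thesis by simp
qed

lemma blk_eq: "B \<in> P \<Longrightarrow> t \<in> B \<Longrightarrow> blk P t = B"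
  unfolding blk_def
proof (rule the_equality)
  fix C assume "B \<in> P" "t \<in> B" "C \<in> P \<and> t \<in> C"
  then show "C = B" using P_uniq[of C B t] by simp
qed simp

lemma blk_in: "t \<in> {1..n} \<Longrightarrow> blk P t \<in> P \<and> t \<in> blk P t"
proof -
  assume "t \<in> {1..n}"
  then have "t \<in> \<Union>P" using pp by (simp add: pair_partition_def partition_on_def)
  then obtain B where "B \<in> P" "t \<in> B" by blast
  then show ?thesis using blk_eq by simp
qed

context
  fixes f :: "nat set \<Rightarrow> nat"
  assumes nc: "noncrossing P" and fpos: "\<forall>B\<in>P. 0 < f B"
begin

abbreviation "wsP \<equiv> Phi n P f"

lemma ws_len: "length wsP = n" by (simp add: Phi_def)

lemma ws_nth: "i < n \<Longrightarrow> wsP ! i = (if Suc i = Min (blk P (Suc i)) then f (blk P (Suc i)) else 0)"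
  by (simp add: Phi_def nth_map_upt del: upt_Suc)

lemma ws_open: "B \<in> P \<Longrightarrow> wsP ! (Min B - 1) = f B"
proof -
  assume B: "B \<in> P"
  have b: "blk P (Min B) = B" using blk_eq[OF B MinIn[OF B]] .
  have "Min B - 1 < n" "Suc (Min B - 1) = Min B" using blkP[OF B] by auto
  then show ?thesis using ws_nth[of "Min B - 1"] b by simp
qed

lemma ws_close: "B \<in> P \<Longrightarrow> wsP ! (Max B - 1) = 0"
proof -
  assume B: "B \<in> P"
  have b: "blk P (Max B) = B" using blk_eq[OF B MaxIn[OF B]] .
  have "Max B - 1 < n" "Suc (Max B - 1) = Max B" "Max B \<noteq> Min B" using blkP[OF B] by auto
  then show ?thesis using ws_nth[of "Max B - 1"] b by simp
qed

lemma MinMax_cases: "t \<in> {1..n} \<Longrightarrow> t = Min (blk P t) \<or> t = Max (blk P t)"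
  using blk_in blk_mem by blast

definition Op :: "nat \<Rightarrow> nat set" where
  "Op t = {Min B | B. B \<in> P \<and> Min B \<le> t \<and> t < Max B}"

lemma nc_rule: "B \<in> P \<Longrightarrow> C \<in> P \<Longrightarrow> \<not> (Min B < Min C \<and> Min C < Max B \<and> Max B < Max C)"
proof -
  assume B: "B \<in> P" and C: "C \<in> P"
  have "\<forall>B\<in>P. \<forall>C\<in>P. \<not> (Min B < Min C \<and> Min C < Max B \<and> Max B < Max C)"
    using nc unfolding noncrossing_def .
  then have "\<forall>C\<in>P. \<not> (Min B < Min C \<and> Min C < Max B \<and> Max B < Max C)" using B by (rule bspec)
  then show ?thesis using C by (rule bspec)
qed

lemma Op_iff: "x \<in> Op t \<longleftrightarrow> (\<exists>B. B \<in> P \<and> x = Min B \<and> Min B \<le> t \<and> t < Max B)"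
  unfolding Op_def by blast

lemma hd_from_O:
  assumes e: "set (stk wsP t) = Op t" and B: "B \<in> P" "Suc t = Max B"
  shows "stk wsP t \<noteq> [] \<and> hd (stk wsP t) = Min B"
proof -
  have "Min B \<in> Op t" using B blkP(2)[OF B(1)] unfolding Op_def by force
  then have mi: "Min B \<in> set (stk wsP t)" using e by simp
  then have ne: "stk wsP t \<noteq> []" by auto
  have "hd (stk wsP t) \<in> Op t" using ne e by (metis list.set_sel(1))
  then obtain C where C: "C \<in> P" "hd (stk wsP t) = Min C" "Min C \<le> t" "t < Max C" unfolding Op_def by blast
  have le: "Min B \<le> Min C" using stk_le_hd[OF mi] C(2) by simp
  have "Min C = Min B"
  proof (rule ccontr)
    assume "Min C \<noteq> Min B"
    then have lt: "Min B < Min C" using le by simp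
    have "Max C \<noteq> Suc t"
    proof
      assume "Max C = Suc t"
      then have "C = B" using P_uniq[OF C(1) B(1), of "Suc t"] MaxIn[OF C(1)] MaxIn[OF B(1)] B(2) by simp
      then show False using \<open>Min C \<noteq> Min B\<close> by simp
    qed
    then have m1: "Max B < Max C" using C(4) B(2) by simp
    have m2: "Min C < Max B" using C(3) B(2) by simp
    have "\<not> (Min B < Min C \<and> Min C < Max B \<and> Max B < Max C)"
      using nc_rule[OF B(1) C(1)] .
    then show False using lt m1 m2 by simp
  qed
  then show ?thesis using ne C(2) by simp
qed

lemma stk_inv: "t \<le> n \<Longrightarrow> set (stk wsP t) = Op t"
proof (induction t)
  case 0
  have "Op 0 = {}" unfolding Op_def by (auto dest: blkP(3))
  then show ?case by simp
next
  case (Suc t)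
  then have IH: "set (stk wsP t) = Op t" and tn: "t < n" by auto
  let ?B = "blk P (Suc t)"
  have B: "?B \<in> P" "Suc t \<in> ?B" using blk_in[of "Suc t"] tn by auto
  consider "Suc t = Min ?B" | "Suc t = Max ?B" "Suc t \<noteq> Min ?B" using MinMax_cases[of "Suc t"] tn by auto
  then show ?case
  proof cases
    case 1
    note mn = 1
    then have w: "wsP ! t = f ?B" "0 < wsP ! t" using ws_nth[OF tn] fpos B by auto
    have "Op (Suc t) = insert (Suc t) (Op t)"
    proof
      show "Op (Suc t) \<subseteq> insert (Suc t) (Op t)"
      proof
        fix x assume "x \<in> Op (Suc t)"
        then obtain C where C: "C \<in> P" "x = Min C" "Min C \<le> Suc t" "Suc t < Max C" unfolding Op_iff by blast
        show "x \<in> insert (Suc t) (Op t)"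
        proof (cases "Min C = Suc t")
          case True then show ?thesis using C by simp
        next
          case False
          then have "Min C \<le> t" "t < Max C" using C by auto
          then have "x \<in> Op t" unfolding Op_iff using C by blast
          then show ?thesis by simp
        qed
      qed
      show "insert (Suc t) (Op t) \<subseteq> Op (Suc t)"
      proof
        fix x assume "x \<in> insert (Suc t) (Op t)"
        then consider "x = Suc t" | C where "C \<in> P" "x = Min C" "Min C \<le> t" "t < Max C"
          unfolding Op_def by blast
        then show "x \<in> Op (Suc t)"
        proof cases
          case 1
          have "Suc t < Max ?B" using mn blkP(2)[OF B(1)] by simp
          then show ?thesis unfolding Op_iff using B(1) mn 1 by (intro exI[of _ ?B]) simp
        next
          case 2
          have "Max C \<noteq> Suc t"
          proof
            assume "Max C = Suc t"
            then have "C = ?B" using P_uniq[OF 2(1) B(1), of "Suc t"] MaxIn[OF 2(1)] B(2) by simp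
            then show False using 2 mn by simp
          qed
          then have "Suc t < Max C" using 2 by simp
          then show ?thesis unfolding Op_iff using 2 by (intro exI[of _ C]) simp
        qed
      qed
    qed
    then show ?thesis using IH w by simp
  next
    case 2
    then have w: "wsP ! t = 0" using ws_nth[OF tn] by simp
    have h: "stk wsP t \<noteq> [] \<and> hd (stk wsP t) = Min ?B" using hd_from_O[OF IH B(1) 2(1)] .
    then obtain r where r: "stk wsP t = Min ?B # r" by (cases "stk wsP t") auto
    have s1: "set (stk wsP (Suc t)) = set r" using w r by simp
    have "Min ?B \<notin> set r" using r stk_distinct[of wsP t] by simp
    then have "set r = set (stk wsP t) - {Min ?B}" using r by auto
    then have st: "set (stk wsP (Suc t)) = Op t - {Min ?B}" using s1 IH by simp
    have "Op (Suc t) = Op t - {Min ?B}"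
    proof
      show "Op (Suc t) \<subseteq> Op t - {Min ?B}"
      proof
        fix x assume "x \<in> Op (Suc t)"
        then obtain C where C: "C \<in> P" "x = Min C" "Min C \<le> Suc t" "Suc t < Max C" unfolding Op_def by blast
        have CB: "C \<noteq> ?B" using C(4) 2(1) by auto
        have "Min C \<noteq> Suc t" using P_uniq[OF C(1) B(1), of "Suc t"] CB MinIn[OF C(1)] B(2) by auto
        moreover have "Min C \<noteq> Min ?B" using P_uniq[OF C(1) B(1), of "Min C"] CB MinIn[OF C(1)] MinIn[OF B(1)] by auto
        ultimately have "Min C \<le> t" "t < Max C" "x \<noteq> Min ?B" using C by auto
        then have "x \<in> Op t" unfolding Op_iff using C(1,2) by blast
        then show "x \<in> Op t - {Min ?B}" using \<open>x \<noteq> Min ?B\<close> by simp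
      qed
      show "Op t - {Min ?B} \<subseteq> Op (Suc t)"
      proof
        fix x assume "x \<in> Op t - {Min ?B}"
        then obtain C where C: "C \<in> P" "x = Min C" "Min C \<le> t" "t < Max C" "Min C \<noteq> Min ?B" unfolding Op_def by blast
        have "C \<noteq> ?B" using C(5) by auto
        then have "Max C \<noteq> Suc t" using P_uniq[OF C(1) B(1), of "Suc t"] MaxIn[OF C(1)] B(2) by auto
        then have "Suc t < Max C" "Min C \<le> Suc t" using C by auto
        then show "x \<in> Op (Suc t)" unfolding Op_iff using C(1,2) by blast
      qed
    qed
    then show ?thesis using st by simp
  qed
qed

lemma Phi_dyck: "dyck wsP"
  unfolding dyck_def ws_len
proof (intro conjI allI impI)
  fix t assume t: "t < n" "wsP ! t = 0"
  let ?B = "blk P (Suc t)"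
  have B: "?B \<in> P" "Suc t \<in> ?B" using blk_in[of "Suc t"] t by auto
  have "Suc t \<noteq> Min ?B" using t ws_nth[OF t(1)] fpos B by auto
  then have "Suc t = Max ?B" using MinMax_cases[of "Suc t"] t by auto
  then show "stk wsP t \<noteq> []" using hd_from_O[OF stk_inv B(1)] t by simp
next
  have "x \<notin> Op n" for x unfolding Op_iff by (auto dest: blkP(4))
  then have "Op n = {}" by blast
  then show "stk wsP n = []" using stk_inv[of n] by simp
qed

lemma Pof_Phi: "Pof wsP = P"
proof
  show "Pof wsP \<subseteq> P"
  proof
    fix X assume "X \<in> Pof wsP"
    then obtain t where t: "t < n" "wsP ! t = 0" "X = {hd (stk wsP t), Suc t}"
      by (auto simp: Pof_def ws_len)
    let ?B = "blk P (Suc t)"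
    have B: "?B \<in> P" "Suc t \<in> ?B" using blk_in[of "Suc t"] t by auto
    have "Suc t \<noteq> Min ?B" using t ws_nth[OF t(1)] fpos B by auto
    then have M: "Suc t = Max ?B" using MinMax_cases[of "Suc t"] t by auto
    then have "hd (stk wsP t) = Min ?B" using hd_from_O[OF stk_inv B(1)] t by simp
    then have "X = {Min ?B, Max ?B}" using t(3) M by simp
    then have "X = ?B" using blkP(1)[OF B(1)] by (rule trans[OF _ sym])
    then show "X \<in> P" using B by simp
  qed
  show "P \<subseteq> Pof wsP"
  proof
    fix B assume B: "B \<in> P"
    let ?t = "Max B - 1"
    have tn: "?t < n" "Suc ?t = Max B" using blkP[OF B] by auto
    have h: "hd (stk wsP ?t) = Min B" using hd_from_O[OF stk_inv B tn(2)] tn by simp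
    have w: "wsP ! ?t = 0" using ws_close[OF B] .
    have "{Min B, Max B} = {hd (stk wsP ?t), Suc ?t}" using h tn(2) by simp
    with blkP(1)[OF B] have e: "B = {hd (stk wsP ?t), Suc ?t}" by (rule trans)
    have l: "?t < length wsP" using tn(1) ws_len by simp
    show "B \<in> Pof wsP" unfolding Pof_def using e l w by blast
  qed
qed

end
end

lemma Pof_mem: "dyck ws \<Longrightarrow> B \<in> Pof ws \<Longrightarrow> x \<in> B \<longleftrightarrow> x = Min B \<or> x = Max B"
proof -
  assume dy: "dyck ws" and B: "B \<in> Pof ws"
  have e: "B = {Min B, Max B}" by (rule blk_props(1)[OF dy B])
  have "x \<in> B \<longleftrightarrow> x \<in> {Min B, Max B}" using e by (rule arg_cong[where f="\<lambda>S. x \<in> S"])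
  then show ?thesis by simp
qed

lemma labs_nth: "labs ws = map (nth ws) (filter (\<lambda>i. 0 < ws ! i) [0..<length ws])"
proof -
  have "labs ws = filter (\<lambda>x. 0 < x) (map (nth ws) [0..<length ws])" by (simp add: labs_def map_nth)
  then show ?thesis by (simp add: filter_map o_def)
qed

lemma distinct_labs_iff:
  "distinct (labs ws) \<longleftrightarrow> (\<forall>i<length ws. \<forall>j<length ws. 0 < ws ! i \<longrightarrow> 0 < ws ! j \<longrightarrow> ws ! i = ws ! j \<longrightarrow> i = j)"
  unfolding labs_nth distinct_map inj_on_def by auto

lemma card_pairs: "pair_partition n P \<Longrightarrow> card P * 2 = n"
proof -
  assume pp: "pair_partition n P"
  have "n = card (\<Union>P)" using pp by (simp add: pair_partition_def partition_on_def)
  also have "\<dots> = sum card P"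
    using pp by (intro card_Union_disjoint) (auto simp: pair_partition_def partition_on_def intro: card_ge_0_finite)
  also have "\<dots> = sum (\<lambda>_. 2) P" using pp by (intro sum.cong) (auto simp: pair_partition_def)
  finally show ?thesis by simp
qed

lemma OV2_to_D:
  assumes "(P, f) \<in> OV2 k"
  shows "Phi (2*k) P f \<in> Dset k"
proof -
  have pp: "pair_partition (2*k) P" and nc: "noncrossing P" and ext: "f \<in> extensional P"
    and bij: "bij_betw f P {1..k}"
    and ch: "\<And>Bs. Bs \<noteq> [] \<Longrightarrow> set Bs \<subseteq> P \<Longrightarrow> chain P Bs \<Longrightarrow> vword (map f Bs)"
    using assms unfolding OV2_def chain_def by auto
  have frng: "B \<in> P \<Longrightarrow> f B \<in> {1..k}" for B using bij by (auto simp: bij_betw_def)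
  then have fpos: "\<forall>B\<in>P. 0 < f B" by fastforce
  let ?ws = "Phi (2*k) P f"
  have dy: "dyck ?ws" using Phi_dyck[OF pp nc fpos] .
  have PP: "Pof ?ws = P" using Pof_Phi[OF pp nc fpos] .
  have len: "length ?ws = 2*k" using ws_len[OF pp nc fpos] .
  have opn: "i < 2*k \<Longrightarrow> 0 < ?ws ! i \<Longrightarrow> blk P (Suc i) \<in> P \<and> Suc i = Min (blk P (Suc i)) \<and> ?ws ! i = f (blk P (Suc i))" for i
    using ws_nth[OF pp nc fpos, of i] blk_in[OF pp, of "Suc i"] by (auto split: if_splits)
  have setws: "set ?ws \<subseteq> {..k}"
  proof
    fix x assume "x \<in> set ?ws"
    then obtain i where i: "i < 2*k" "x = ?ws ! i" using len by (auto simp: in_set_conv_nth)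
    show "x \<in> {..k}"
    proof (cases "0 < x")
      case True then show ?thesis using opn[of i] i frng by force
    qed simp
  qed
  have val: "valid ?ws" unfolding valid_def
  proof (intro conjI dy allI impI)
    fix t assume t: "t < length ?ws" "0 < ?ws ! t"
    let ?B = "blk P (Suc t)"
    have B: "?B \<in> P" "Suc t = Min ?B" using opn[of t] t len by auto
    obtain Bs where Bs: "Bs \<noteq> []" "hd Bs = ?B" "set Bs \<subseteq> P" "chain P Bs" "map Min Bs = stk ?ws (Min ?B)"
      using stack_chain[OF dy, of ?B] PP B by auto
    have "stk ?ws (Suc t) = map Min Bs" using Bs(5) B(2) by (simp del: stk.simps)
    then have "map (lab ?ws) (stk ?ws (Suc t)) = map (lab ?ws \<circ> Min) Bs" by simp
    also have "\<dots> = map f Bs"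
      using Bs(3) ws_open[OF pp nc fpos] by (auto simp: lab_def)
    finally show "vword (map (lab ?ws) (stk ?ws (Suc t)))" using ch[OF Bs(1,3,4)] by simp
  qed
  have dist: "distinct (labs ?ws)" unfolding distinct_labs_iff
  proof (intro allI impI)
    fix i j assume a: "i < length ?ws" "j < length ?ws" "0 < ?ws ! i" "0 < ?ws ! j" "?ws ! i = ?ws ! j"
    have "blk P (Suc i) = blk P (Suc j)"
      using opn[of i] opn[of j] a len bij unfolding bij_betw_def inj_on_def by auto
    then show "i = j" using opn[of i] opn[of j] a len by (metis Suc_inject)
  qed
  show ?thesis using setws len val dist run_valid by (simp add: Dset_def walks_def)
qed

lemma D_to_OV2:
  assumes ws: "ws \<in> Dset k"
  defines "F \<equiv> restrict (\<lambda>B. ws ! (Min B - 1)) (Pof ws)"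
  shows "(Pof ws, F) \<in> OV2 k \<and> Phi (2*k) (Pof ws) F = ws"
proof -
  have len: "length ws = 2*k" and sw: "set ws \<subseteq> {..k}" and val: "valid ws" and dist: "distinct (labs ws)"
    using ws run_valid by (auto simp: Dset_def walks_def)
  have dy: "dyck ws" using val by (simp add: valid_def)
  let ?P = "Pof ws"
  have pp: "pair_partition (2*k) ?P" using Pof_partition[OF dy] len by simp
  have nc: "noncrossing ?P" using Pof_noncrossing[OF dy] .
  have Fv: "B \<in> ?P \<Longrightarrow> F B = ws ! (Min B - 1)" for B by (simp add: F_def)
  have inj: "inj_on F ?P"
  proof (rule inj_onI)
    fix B C assume B: "B \<in> ?P" and C: "C \<in> ?P" and e: "F B = F C"
    have "Min B - 1 = Min C - 1"
      using dist[unfolded distinct_labs_iff, rule_format, of "Min B - 1" "Min C - 1"]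
        blk_props(3,4,5,2)[OF dy B] blk_props(3,4,5,2)[OF dy C] e Fv B C by auto
    then have "Min B = Min C" using blk_props(3)[OF dy B] blk_props(3)[OF dy C] by simp
    then show "B = C" using blk_eq_Min[OF dy B C] by simp
  qed
  have sub: "F ` ?P \<subseteq> {1..k}"
  proof
    fix x assume "x \<in> F ` ?P"
    then obtain B where B: "B \<in> ?P" "x = F B" by auto
    have "Min B - 1 < length ws" using blk_props(2,3,4)[OF dy B(1)] by simp
    then have "ws ! (Min B - 1) \<in> set ws" by simp
    then show "x \<in> {1..k}" using B Fv blk_props(5)[OF dy B(1)] sw by fastforce
  qed
  have cP: "card ?P = k" using card_pairs[OF pp] by simp
  have img: "F ` ?P = {1..k}"
    using card_image[OF inj] cP sub by (intro card_subset_eq) auto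
  have bij: "bij_betw F ?P {1..k}" using inj img by (simp add: bij_betw_def)
  have chain_ok: "vword (map F Bs)" if Bs: "Bs \<noteq> []" "set Bs \<subseteq> ?P" "chain ?P Bs" for Bs
  proof -
    let ?B = "hd Bs"
    have B: "?B \<in> ?P" using Bs by (cases Bs) auto
    have "map F Bs = map (lab ws) (map Min Bs)" using Bs(2) Fv by (auto simp: lab_def)
    also have "\<dots> = take (length Bs) (map (lab ws) (stk ws (Min ?B)))"
      using chain_prefix[OF dy Bs] by (simp add: take_map)
    finally have e: "map F Bs = take (length Bs) (map (lab ws) (stk ws (Min ?B)))" .
    have t: "Min ?B - 1 < length ws" "0 < ws ! (Min ?B - 1)" "Suc (Min ?B - 1) = Min ?B"
      using blk_props(2,3,4,5)[OF dy B] by auto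
    have "vword (map (lab ws) (stk ws (Min ?B)))"
      using val[unfolded valid_def] t by (metis)
    then show ?thesis using e vword_take by simp
  qed
  have inOV: "(?P, F) \<in> OV2 k"
    unfolding OV2_def using pp nc bij chain_ok by (auto simp: F_def chain_def)
  have phi: "Phi (2*k) ?P F = ws"
  proof (rule nth_equalityI)
    show "length (Phi (2*k) ?P F) = length ws" by (simp add: Phi_def len del: upt_Suc)
    fix i assume "i < length (Phi (2*k) ?P F)"
    then have i: "i < 2*k" by (simp add: Phi_def del: upt_Suc)
    let ?B = "blk ?P (Suc i)"
    have B: "?B \<in> ?P" "Suc i \<in> ?B" using blk_in[OF pp, of "Suc i"] i by auto
    have "Phi (2*k) ?P F ! i = (if Suc i = Min ?B then F ?B else 0)"
      by (simp add: Phi_def nth_map_upt i del: upt_Suc)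
    also have "\<dots> = ws ! i"
    proof (cases "Suc i = Min ?B")
      case True then show ?thesis using Fv[OF B(1)] by simp
    next
      case False
      then have "Suc i = Max ?B" using B(2) Pof_mem[OF dy B(1)] by blast
      then show ?thesis using False blk_props(6)[OF dy B(1)] by simp
    qed
    finally show "Phi (2*k) ?P F ! i = ws ! i" .
  qed
  show ?thesis using inOV phi by simp
qed

lemma card_D_OV2: "card (Dset k) = card (OV2 k)"
proof -
  let ?g = "\<lambda>(P, f). Phi (2*k) P f"
  have inj: "inj_on ?g (OV2 k)"
  proof (rule inj_onI)
    fix x y assume x: "x \<in> OV2 k" and y: "y \<in> OV2 k" and e: "?g x = ?g y"
    obtain P f where xp: "x = (P, f)" by (cases x)
    obtain P' f' where yp: "y = (P', f')" by (cases y)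
    have X: "pair_partition (2*k) P" "noncrossing P" "f \<in> extensional P" "bij_betw f P {1..k}"
      using x xp by (auto simp: OV2_def)
    have Y: "pair_partition (2*k) P'" "noncrossing P'" "f' \<in> extensional P'" "bij_betw f' P' {1..k}"
      using y yp by (auto simp: OV2_def)
    have fp: "\<forall>B\<in>P. 0 < f B" using X(4) by (fastforce simp: bij_betw_def)
    have fp': "\<forall>B\<in>P'. 0 < f' B" using Y(4) by (fastforce simp: bij_betw_def)
    have e': "Phi (2*k) P f = Phi (2*k) P' f'" using e xp yp by simp
    have PP: "P = P'" using Pof_Phi[OF X(1,2) fp] Pof_Phi[OF Y(1,2) fp'] e' by simp
    have "f B = f' B" if "B \<in> P" for B
      using ws_open[OF X(1,2) fp that] ws_open[OF Y(1,2) fp'] that PP e' by simp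
    then have "f = f'" using X(3) Y(3) PP by (intro extensionalityI) auto
    then show "x = y" using xp yp PP by simp
  qed
  have img: "?g ` OV2 k = Dset k"
  proof
    show "?g ` OV2 k \<subseteq> Dset k" using OV2_to_D by auto
    show "Dset k \<subseteq> ?g ` OV2 k"
    proof
      fix ws assume "ws \<in> Dset k"
      then show "ws \<in> ?g ` OV2 k" using D_to_OV2[of ws k] by (auto intro!: image_eqI[of _ _ "(Pof ws, restrict (\<lambda>B. ws ! (Min B - 1)) (Pof ws))"])
    qed
  qed
  show ?thesis using card_image[OF inj] img by simp
qed

theorem mainTheorem15:
  fixes k :: nat
  shows "((\<lambda>N. vac (omegaN N ^^ (2 * k))) \<longlonglongrightarrow> real (card (OV2 k)) / fact k) \<and>
         ((\<lambda>N. vac (omegaN N ^^ (2 * k + 1))) \<longlonglongrightarrow> 0)"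
proof
  show "(\<lambda>N. vac (omegaN N ^^ (2 * k))) \<longlonglongrightarrow> real (card (OV2 k)) / fact k"
    using vac_even_lim[of k] by (simp add: card_D_OV2)
  have "(\<lambda>N. vac (omegaN N ^^ (2 * k + 1))) = (\<lambda>N. 0)" by (rule ext) (rule vac_odd)
  then show "(\<lambda>N. vac (omegaN N ^^ (2 * k + 1))) \<longlonglongrightarrow> 0" by simp
qed

end
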